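(* Let $\Sigma=(\mathbf{x},\mathbf{F})$ be an LP seed of rank $n\ge2$ satisfying Condition 1.2. Then $$\mathrm{Im}(\varphi)=R[x_2,x_2^{(-)},\dots,x_n,x_n^{(-)}],\qquad\text{where } x_j^{(-)}=\begin{cases}x'_j,& \text{if } F_j \text{ does not involve } x_1,\\ x_j^{-1},&\text{otherwise.}\end{cases}$$
   Context: $R$ is a unique factorization domain containing $\mathbb{Z}$ and $\mathcal{F}$ is the field of rational functions in $n$ variables over $\mathrm{Frac}(R)$. An LP seed of rank $n$ is a pair $(\mathbf{x},\mathbf{F})$ where $\mathbf{x}=\{x_1,\dots,x_n\}$ is a transcendence basis of $\mathcal{F}$ over $\mathrm{Frac}(R)$ and $\mathbf{F}=\{F_1,\dots,F_n\}$ are irreducible polynomials in $R[x_1,\dots,x_n]$ with $x_j\nmid F_i$ for all $i,j$ and $F_i$ not involving $x_i$. The exchange Laurent polynomial is $\hat F_j=F_j/\prod_{k\neq j}x_k^{a_k}$, with $a_k\in\mathbb{Z}_{\ge0}$ maximal such that $F_k^{a_k}$ divides $F_j|_{x_k\leftarrow F_k/x'_k}$ in $R[x_1,\dots,x_{k-1},(x'_k)^{-1},x_{k+1},\dots,x_n]$. Set $x'_j=\hat F_j/x_j$. Lexicographic order on $\mathbb{Z}^n$: $\mathbf{a}\prec\mathbf{a}'$ if the first nonzero entry of $\mathbf{a}'-\mathbf{a}$ is positive; the lexicographically first monomial of a polynomial is its term with $\prec$-smallest exponent vector. Condition 1.2: for every $k\in[1,n]$, with $M_k$ the lexicographically first monomial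 of $F_k$: (i) $\hat F_k=F_k$; (ii) $M_k=x_{k+1}^{v_{k+1,k}}\cdots x_n^{v_{n,k}}$ (coefficient $1$) with $v_{\cdot,k}\in\mathbb{Z}_{\ge0}$ for $k\in[1,n-1]$, and $M_n=1$; (iii) if $k\ne1$ and $F_k$ involves $x_1$, then every monomial of $F_k-M_k$ is divisible by $x_1$; (iv) if $k\notin\{1,2\}$, $F_k$ does not involve $x_1$, and there is $i\in[2,k-1]$ such that $x_k$ divides $M_i$, then every monomial of $F_k-M_k$ is divisible by $x_i$. Under (i), $R[x_2,x'_2,\dots,x_n,x'_n]\subseteq R[x_1,x_2^{\pm1},\dots,x_n^{\pm1}]$; $\varphi:R[x_2,x'_2,\dots,x_n,x'_n]\to R[x_2^{\pm1},\dots,x_n^{\pm1}]$ is the restriction of the $R$-algebra homomorphism $R[x_1,x_2^{\pm1},\dots,x_n^{\pm1}]\to R[x_2^{\pm1},\dots,x_n^{\pm1}]$ sending $x_1\mapsto0$, $x_i^{\pm1}\mapsto x_i^{\pm1}$ ($i\ge2$). *)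

theory Defs
  imports "HOL-Library.Poly_Mapping" "HOL-Computational_Algebra.Factorial_Ring"
begin

text \<open>The cluster variables x_1,...,x_n of the seed form a transcendence basis, so the
  subring R[x_1^{\<pm>1},...,x_n^{\<pm>1}] of the ambient field is identified with the
  Laurent polynomial ring over R in the variables indexed by 1..n.
  A Laurent polynomial is a finitely supported map from exponent vectors
  (finitely supported maps nat to int, index i = exponent of x_i) to coefficients in R.\<close>

type_synonym 'a lpoly = "(nat \<Rightarrow>\<^sub>0 int) \<Rightarrow>\<^sub>0 'a"

definition lconst :: "'a::comm_ring_1 \<Rightarrow> 'a lpoly" where
  "lconst c = Poly_Mapping.single 0 c"

definition lvar :: "nat \<Rightarrow> 'a::comm_ring_1 lpoly" where
  "lvar i = Poly_Mapping.single (Poly_Mapping.single i 1) 1"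

definition lvar_pow :: "nat \<Rightarrow> int \<Rightarrow> 'a::comm_ring_1 lpoly" where
  "lvar_pow i e = Poly_Mapping.single (Poly_Mapping.single i e) 1"

definition expo_ok :: "nat \<Rightarrow> (nat \<Rightarrow>\<^sub>0 int) \<Rightarrow> bool" where
  "expo_ok n m \<longleftrightarrow> (\<forall>i. Poly_Mapping.lookup m i \<noteq> 0 \<longrightarrow> i \<in> {1..n})"

definition is_poly :: "nat \<Rightarrow> 'a::comm_ring_1 lpoly \<Rightarrow> bool" where
  "is_poly n p \<longleftrightarrow> (\<forall>m \<in> Poly_Mapping.keys p. expo_ok n m \<and> (\<forall>i. Poly_Mapping.lookup m i \<ge> 0))"

definition polyring :: "nat \<Rightarrow> 'a::comm_ring_1 lpoly set" where
  "polyring n = {p. is_poly n p}"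

definition pdvd :: "nat \<Rightarrow> 'a::comm_ring_1 lpoly \<Rightarrow> 'a lpoly \<Rightarrow> bool" where
  "pdvd n a b \<longleftrightarrow> (\<exists>c \<in> polyring n. b = a * c)"

definition punit :: "nat \<Rightarrow> 'a::comm_ring_1 lpoly \<Rightarrow> bool" where
  "punit n a \<longleftrightarrow> a \<in> polyring n \<and> (\<exists>c \<in> polyring n. a * c = 1)"

definition pirreducible :: "nat \<Rightarrow> 'a::comm_ring_1 lpoly \<Rightarrow> bool" where
  "pirreducible n p \<longleftrightarrow> p \<in> polyring n \<and> p \<noteq> 0 \<and> \<not> punit n p \<and>
     (\<forall>a \<in> polyring n. \<forall>b \<in> polyring n. p = a * b \<longrightarrow> punit n a \<or> punit n b)"

definition involves :: "'a::comm_ring_1 lpoly \<Rightarrow> nat \<Rightarrow> bool" where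
  "involves p i \<longleftrightarrow> (\<exists>m \<in> Poly_Mapping.keys p. Poly_Mapping.lookup m i \<noteq> 0)"

definition LP_seed :: "nat \<Rightarrow> (nat \<Rightarrow> 'a::comm_ring_1 lpoly) \<Rightarrow> bool" where
  "LP_seed n F \<longleftrightarrow> (\<forall>i \<in> {1..n}. pirreducible n (F i) \<and> \<not> involves (F i) i \<and>
      (\<forall>j \<in> {1..n}. \<not> pdvd n (lvar j) (F i)))"

text \<open>Substitution x_k \<leftarrow> G * y in a polynomial p, where the new variable
  y = (x'_k)^{-1} occupies the k-th slot: the term c x^m is sent to
  c (prod_{i\<noteq>k} x_i^{m_i}) y^{m_k} G^{m_k}.\<close>
definition subst_var :: "nat \<Rightarrow> 'a::comm_ring_1 lpoly \<Rightarrow> 'a lpoly \<Rightarrow> 'a lpoly" where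
  "subst_var k G p = (\<Sum>m \<in> Poly_Mapping.keys p. Poly_Mapping.single m (Poly_Mapping.lookup p m) * G ^ nat (Poly_Mapping.lookup m k))"

definition exch_exp :: "nat \<Rightarrow> (nat \<Rightarrow> 'a::comm_ring_1 lpoly) \<Rightarrow> nat \<Rightarrow> nat \<Rightarrow> nat" where
  "exch_exp n F j k = (GREATEST a. pdvd n (F k ^ a) (subst_var k (F k) (F j)))"

definition hatF :: "nat \<Rightarrow> (nat \<Rightarrow> 'a::comm_ring_1 lpoly) \<Rightarrow> nat \<Rightarrow> 'a lpoly" where
  "hatF n F j = F j * (\<Prod>k \<in> {1..n} - {j}. lvar_pow k (- int (exch_exp n F j k)))"

definition xprime :: "nat \<Rightarrow> (nat \<Rightarrow> 'a::comm_ring_1 lpoly) \<Rightarrow> nat \<Rightarrow> 'a lpoly" where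
  "xprime n F j = hatF n F j * lvar_pow j (-1)"

definition lex_less :: "nat \<Rightarrow> (nat \<Rightarrow>\<^sub>0 int) \<Rightarrow> (nat \<Rightarrow>\<^sub>0 int) \<Rightarrow> bool" where
  "lex_less n a b \<longleftrightarrow> (\<exists>i \<in> {1..n}. Poly_Mapping.lookup a i < Poly_Mapping.lookup b i \<and> (\<forall>j \<in> {1..<i}. Poly_Mapping.lookup a j = Poly_Mapping.lookup b j))"

definition lex_first :: "nat \<Rightarrow> 'a::comm_ring_1 lpoly \<Rightarrow> (nat \<Rightarrow>\<^sub>0 int)" where
  "lex_first n p = (THE m. m \<in> Poly_Mapping.keys p \<and> (\<forall>m' \<in> Poly_Mapping.keys p. m' \<noteq> m \<longrightarrow> lex_less n m m'))"

definition lex_first_mono :: "nat \<Rightarrow> 'a::comm_ring_1 lpoly \<Rightarrow> 'a lpoly" where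
  "lex_first_mono n p = Poly_Mapping.single (lex_first n p) (Poly_Mapping.lookup p (lex_first n p))"

definition condition_1_2 :: "nat \<Rightarrow> (nat \<Rightarrow> 'a::comm_ring_1 lpoly) \<Rightarrow> bool" where
  "condition_1_2 n F \<longleftrightarrow> (\<forall>k \<in> {1..n}.
     hatF n F k = F k \<and>
     Poly_Mapping.lookup (F k) (lex_first n (F k)) = 1 \<and>
     (k < n \<longrightarrow> (\<forall>i \<in> {1..k}. Poly_Mapping.lookup (lex_first n (F k)) i = 0)) \<and>
     (k = n \<longrightarrow> lex_first n (F k) = 0) \<and>
     ((k \<noteq> 1 \<and> involves (F k) 1) \<longrightarrow>
        (\<forall>m \<in> Poly_Mapping.keys (F k - lex_first_mono n (F k)). Poly_Mapping.lookup m 1 \<ge> 1)) \<and>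
     ((k \<notin> {1, 2} \<and> \<not> involves (F k) 1) \<longrightarrow>
        (\<forall>i \<in> {2..k-1}. Poly_Mapping.lookup (lex_first n (F i)) k \<ge> 1 \<longrightarrow>
           (\<forall>m \<in> Poly_Mapping.keys (F k - lex_first_mono n (F k)). Poly_Mapping.lookup m i \<ge> 1))))"

inductive_set ralg :: "'a::comm_ring_1 lpoly set \<Rightarrow> 'a lpoly set" for S where
  const: "lconst c \<in> ralg S"
| gen: "s \<in> S \<Longrightarrow> s \<in> ralg S"
| add: "p \<in> ralg S \<Longrightarrow> q \<in> ralg S \<Longrightarrow> p + q \<in> ralg S"
| mult: "p \<in> ralg S \<Longrightarrow> q \<in> ralg S \<Longrightarrow> p * q \<in> ralg S"

text \<open>phi: on R[x_1, x_2^{\<pm>1},...,x_n^{\<pm>1}] this is the homomorphism x_1 \<mapsto> 0, i.e.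
  it keeps exactly the terms in which x_1 does not occur.\<close>
definition phi :: "'a::comm_ring_1 lpoly \<Rightarrow> 'a lpoly" where
  "phi p = Poly_Mapping.Abs_poly_mapping (\<lambda>m. if Poly_Mapping.lookup m 1 = 0 then Poly_Mapping.lookup p m else 0)"

definition xminus :: "nat \<Rightarrow> (nat \<Rightarrow> 'a::comm_ring_1 lpoly) \<Rightarrow> nat \<Rightarrow> 'a lpoly" where
  "xminus n F j = (if \<not> involves (F j) 1 then xprime n F j else lvar_pow j (-1))"

end

theory Submission
  imports Defs
begin



definition XX :: "(nat \<Rightarrow>\<^sub>0 int) \<Rightarrow> 'a::comm_ring_1 lpoly" where
  "XX m = Poly_Mapping.single m 1"
definition ee :: "nat \<Rightarrow> nat \<Rightarrow>\<^sub>0 int" where "ee k = Poly_Mapping.single k 1"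

lemma XX_add: "XX (a + b) = (XX a * XX b :: 'a::comm_ring_1 lpoly)"
  by (simp add: XX_def mult_single)
lemma XX_0: "XX 0 = (1 :: 'a::comm_ring_1 lpoly)" by (simp add: XX_def)
lemma lvar_XX: "lvar i = XX (ee i)" by (simp add: lvar_def XX_def ee_def)
lemma lvar_pow_XX: "lvar_pow i z = XX (Poly_Mapping.single i z)" by (simp add: lvar_pow_def XX_def)
lemma lookup_ee: "Poly_Mapping.lookup (ee k) i = (if i = k then 1 else 0)"
  by (simp add: ee_def lookup_single)

lemma lconst_mult: "lconst c * p = Poly_Mapping.map ((*) c) p"
  by (simp add: lconst_def mult_map_scale_conv_mult)

lemma ralg_zero: "0 \<in> ralg S"
  using ralg.const[of 0 S] by (simp add: lconst_def)
lemma ralg_one: "1 \<in> ralg S"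
  using ralg.const[of 1 S] by (simp add: lconst_def)
lemma ralg_neg: assumes "p \<in> ralg S" shows "- p \<in> ralg S"
proof -
  have "lconst (-1) * p = - p" by (simp add: lconst_def single_uminus)
  with ralg.mult[OF ralg.const[of "-1"] assms] show ?thesis by simp
qed
lemma ralg_diff: "p \<in> ralg S \<Longrightarrow> q \<in> ralg S \<Longrightarrow> p - q \<in> ralg S"
  using ralg.add[OF _ ralg_neg] by (metis diff_conv_add_uminus)
lemma ralg_pow: "p \<in> ralg S \<Longrightarrow> p ^ k \<in> ralg S"
  by (induction k) (auto intro: ralg_one ralg.mult)
lemma ralg_sum: "finite I \<Longrightarrow> (\<And>i. i \<in> I \<Longrightarrow> f i \<in> ralg S) \<Longrightarrow> sum f I \<in> ralg S"
  by (induction I rule: finite_induct) (auto intro: ralg_zero ralg.add)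
lemma ralg_mono: assumes "S \<subseteq> ralg T" shows "ralg S \<subseteq> ralg T"
proof
  fix p assume "p \<in> ralg S" then show "p \<in> ralg T"
    by induction (use assms in \<open>auto intro: ralg.intros\<close>)
qed

lemma pm_sum_singles: "p = (\<Sum>m \<in> Poly_Mapping.keys p. Poly_Mapping.single m (Poly_Mapping.lookup p m))"
proof (rule poly_mapping_eqI)
  fix k
  have "(\<Sum>m \<in> Poly_Mapping.keys p. Poly_Mapping.lookup (Poly_Mapping.single m (Poly_Mapping.lookup p m)) k)
     = (\<Sum>m \<in> Poly_Mapping.keys p. if m = k then Poly_Mapping.lookup p k else 0)"
    by (rule sum.cong) (auto simp: lookup_single)
  also have "\<dots> = Poly_Mapping.lookup p k" by (simp add: in_keys_iff)
  finally show "Poly_Mapping.lookup p k = Poly_Mapping.lookup (\<Sum>m \<in> Poly_Mapping.keys p. Poly_Mapping.single m (Poly_Mapping.lookup p m)) k"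
    by (simp add: lookup_sum)
qed

lemma XX_single_nat: "XX (Poly_Mapping.single a (int k)) = (XX (ee a) ^ k :: 'a::comm_ring_1 lpoly)"
proof (induction k)
  case 0 then show ?case by (simp add: XX_0)
next
  case (Suc k)
  have "Poly_Mapping.single a (int (Suc k)) = ee a + Poly_Mapping.single a (int k)"
    by (simp add: ee_def single_add[symmetric])
  then show ?case using Suc by (simp add: XX_add)
qed

definition mon :: "nat \<Rightarrow> (nat \<Rightarrow>\<^sub>0 int) \<Rightarrow> bool" where
  "mon n m \<longleftrightarrow> (\<forall>k. 0 \<le> Poly_Mapping.lookup m k) \<and> (\<forall>k. Poly_Mapping.lookup m k \<noteq> 0 \<longrightarrow> k \<in> {2..n})"

lemma mon_add: "mon n a \<Longrightarrow> mon n b \<Longrightarrow> mon n (a + b)"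
  unfolding mon_def by (auto simp: lookup_add) (metis add.right_neutral add_nonneg_nonneg)+

lemma mon_XX:
  fixes G :: "'a::comm_ring_1 lpoly set"
  assumes "\<And>k. k \<in> {2..n} \<Longrightarrow> lvar k \<in> ralg G"
  shows "mon n m \<Longrightarrow> XX m \<in> ralg G"
proof (induction m rule: update_induct)
  case const then show ?case by (simp add: XX_0 ralg_one)
next
  case (update f a b)
  have up: "Poly_Mapping.update a b f = f + Poly_Mapping.single a (b::int)"
    using update.hyps(1) by (intro poly_mapping_eqI) (auto simp: lookup_update lookup_add lookup_single in_keys_iff)
  have mf: "mon n f" using update.prems update.hyps(1)
    unfolding mon_def by (auto simp: lookup_update in_keys_iff split: if_splits) (metis order_refl)+
  have ab: "a \<in> {2..n}" "0 \<le> b" using update.prems update.hyps(2) unfolding mon_def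
    by (metis lookup_update)+
  then obtain k where bk: "b = int k" by (metis nonneg_int_cases)
  have "XX (Poly_Mapping.single a b) \<in> ralg G"
    using ab bk by (simp add: XX_single_nat lvar_XX[symmetric] assms ralg_pow)
  then show ?case using update.IH[OF mf] by (simp add: up XX_add ralg.mult)
qed

lemma poly_in_ralg:
  fixes G :: "'a::comm_ring_1 lpoly set"
  assumes "\<And>k. k \<in> {2..n} \<Longrightarrow> lvar k \<in> ralg G"
  and "\<And>m. m \<in> Poly_Mapping.keys p \<Longrightarrow> mon n m"
  shows "p \<in> ralg G"
proof -
  have "p = (\<Sum>m \<in> Poly_Mapping.keys p. lconst (Poly_Mapping.lookup p m) * XX m)"
    by (subst pm_sum_singles) (simp add: lconst_def XX_def mult_single)
  also have "\<dots> \<in> ralg G"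
    by (rule ralg_sum) (auto intro!: ralg.mult ralg.const mon_XX[OF assms(1)] assms(2))
  finally show ?thesis .
qed




lemma lookup_phi: "Poly_Mapping.lookup (phi p) m = (if Poly_Mapping.lookup m 1 = 0 then Poly_Mapping.lookup p m else 0)"
proof -
  have "finite {m. (if Poly_Mapping.lookup m 1 = 0 then Poly_Mapping.lookup p m else 0) \<noteq> 0}"
    by (rule finite_subset[of _ "Poly_Mapping.keys p"]) (auto simp: in_keys_iff split: if_splits)
  then show ?thesis unfolding phi_def by simp
qed
lemma phi_add: "phi (p + q) = phi p + phi q"
  by (rule poly_mapping_eqI) (simp add: lookup_phi lookup_add)
lemma phi_0: "phi 0 = 0"
  by (rule poly_mapping_eqI) (simp add: lookup_phi)
lemma phi_sum: "phi (sum f I) = (\<Sum>i\<in>I. phi (f i))"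
  by (induction I rule: infinite_finite_induct) (auto simp: phi_0 phi_add)
lemma phi_single: "phi (Poly_Mapping.single m c) = (if Poly_Mapping.lookup m 1 = 0 then Poly_Mapping.single m c else 0)"
  by (rule poly_mapping_eqI) (auto simp: lookup_phi lookup_single when_def)
lemma phi_id: "(\<And>m. m \<in> Poly_Mapping.keys p \<Longrightarrow> Poly_Mapping.lookup m 1 = 0) \<Longrightarrow> phi p = p"
  by (rule poly_mapping_eqI) (auto simp: lookup_phi in_keys_iff)
lemma phi_kill: "(\<And>m. m \<in> Poly_Mapping.keys p \<Longrightarrow> Poly_Mapping.lookup m 1 \<noteq> 0) \<Longrightarrow> phi p = 0"
  by (rule poly_mapping_eqI) (auto simp: lookup_phi in_keys_iff)
lemma phi_lconst: "phi (lconst c) = lconst c"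
  by (simp add: lconst_def phi_single)
definition Apos :: "'a::comm_ring_1 lpoly \<Rightarrow> bool" where
  "Apos p \<longleftrightarrow> (\<forall>m\<in>Poly_Mapping.keys p. 0 \<le> Poly_Mapping.lookup m 1)"

lemma Apos_add: "Apos p \<Longrightarrow> Apos q \<Longrightarrow> Apos (p + q)"
  unfolding Apos_def using keys_add[of p q] by (meson UnE subsetD)
lemma Apos_mult: "Apos p \<Longrightarrow> Apos q \<Longrightarrow> Apos (p * q)"
proof -
  assume a: "Apos p" "Apos q"
  show "Apos (p * q)" unfolding Apos_def
  proof
    fix m assume "m \<in> Poly_Mapping.keys (p * q)"
    then obtain a b where "m = a + b" "a \<in> Poly_Mapping.keys p" "b \<in> Poly_Mapping.keys q"
      using keys_mult[of p q] by blast
    then show "0 \<le> Poly_Mapping.lookup m 1" using a unfolding Apos_def lookup_add by (simp add: lookup_add)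
  qed
qed
lemma Apos_lconst: "Apos (lconst c)"
  unfolding Apos_def lconst_def by simp
lemma phi_mult:
  fixes p q :: "'a::comm_ring_1 lpoly"
  assumes "Apos p" "Apos q"
  shows "phi (p * q) = phi p * phi q"
proof -
  let ?sp = "\<lambda>a. Poly_Mapping.single a (Poly_Mapping.lookup p a)"
  let ?sq = "\<lambda>b. Poly_Mapping.single b (Poly_Mapping.lookup q b)"
  have e: "p * q = (\<Sum>a\<in>Poly_Mapping.keys p. ?sp a) * (\<Sum>b\<in>Poly_Mapping.keys q. ?sq b)"
    by (simp only: pm_sum_singles[symmetric])
  also have "\<dots> = (\<Sum>a\<in>Poly_Mapping.keys p. \<Sum>b\<in>Poly_Mapping.keys q. ?sp a * ?sq b)"
    by (simp add: sum_product)
  finally have pq: "phi (p * q) = (\<Sum>a\<in>Poly_Mapping.keys p. \<Sum>b\<in>Poly_Mapping.keys q. phi (?sp a * ?sq b))"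
    by (simp add: phi_sum)
  have "phi p * phi q = (\<Sum>a\<in>Poly_Mapping.keys p. phi (?sp a)) * (\<Sum>b\<in>Poly_Mapping.keys q. phi (?sq b))"
    by (simp only: phi_sum[symmetric] pm_sum_singles[symmetric])
  also have "\<dots> = (\<Sum>a\<in>Poly_Mapping.keys p. \<Sum>b\<in>Poly_Mapping.keys q. phi (?sp a) * phi (?sq b))"
    by (simp add: sum_product)
  also have "\<dots> = (\<Sum>a\<in>Poly_Mapping.keys p. \<Sum>b\<in>Poly_Mapping.keys q. phi (?sp a * ?sq b))"
  proof (intro sum.cong refl)
    fix a b assume ab: "a \<in> Poly_Mapping.keys p" "b \<in> Poly_Mapping.keys q"
    then have "0 \<le> Poly_Mapping.lookup a 1" "0 \<le> Poly_Mapping.lookup b 1"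
      using assms unfolding Apos_def by auto
    then show "phi (?sp a) * phi (?sq b) = phi (?sp a * ?sq b)"
      by (auto simp: phi_single mult_single lookup_add)
  qed
  finally show ?thesis using pq by simp
qed

lemma ralg_Apos: assumes "\<And>s. s \<in> S \<Longrightarrow> Apos s" shows "p \<in> ralg S \<Longrightarrow> Apos p"
  by (induction p rule: ralg.induct) (auto intro: Apos_add Apos_mult Apos_lconst assms)

lemma phi_ralg:
  fixes S :: "'a::comm_ring_1 lpoly set"
  assumes A: "\<And>s. s \<in> S \<Longrightarrow> Apos s"
  shows "phi ` ralg S = ralg (phi ` S)"
proof
  show "phi ` ralg S \<subseteq> ralg (phi ` S)"
  proof
    fix y assume "y \<in> phi ` ralg S"
    then obtain p where p: "p \<in> ralg S" "y = phi p" by auto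
    have "phi p \<in> ralg (phi ` S)" using p(1)
    proof induction
      case (const c) then show ?case by (simp add: phi_lconst ralg.const)
    next
      case (gen s) then show ?case by (simp add: ralg.gen)
    next
      case (add p q) then show ?case by (simp add: phi_add ralg.add)
    next
      case (mult p q) then show ?case
        by (simp add: phi_mult ralg_Apos[OF A] ralg.mult)
    qed
    then show "y \<in> ralg (phi ` S)" using p by simp
  qed
next
  show "ralg (phi ` S) \<subseteq> phi ` ralg S"
  proof
    fix y assume "y \<in> ralg (phi ` S)"
    then show "y \<in> phi ` ralg S"
    proof induction
      case (const c) then show ?case
        by (metis image_eqI phi_lconst ralg.const)
    next
      case (gen s) then show ?case by (auto intro: ralg.gen)
    next
      case (add p q)
      then obtain p' q' where "p' \<in> ralg S" "q' \<in> ralg S" "p = phi p'" "q = phi q'" by auto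
      then show ?case by (metis image_eqI phi_add ralg.add)
    next
      case (mult p q)
      then obtain p' q' where "p' \<in> ralg S" "q' \<in> ralg S" "p = phi p'" "q = phi q'" by auto
      then show ?case by (metis image_eqI phi_mult ralg_Apos[OF A] ralg.mult)
    qed
  qed
qed




lemma desc_induct:
  fixes n i :: nat
  assumes "i \<le> n" and step: "\<And>i. i \<le> n \<Longrightarrow> (\<And>l. i < l \<Longrightarrow> l \<le> n \<Longrightarrow> P l) \<Longrightarrow> P i"
  shows "P i"
  using assms(1)
proof (induction "n - i" arbitrary: i rule: less_induct)
  case less
  show ?case by (rule step[OF less.prems]) (rule less.hyps; simp add: less.prems)
qed

lemma keys_XX: "Poly_Mapping.keys (XX m :: 'b::comm_ring_1 lpoly) = {m}"
  by (simp add: XX_def)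

locale lpctx =
  fixes n :: nat and F :: "nat \<Rightarrow> 'a::comm_ring_1 lpoly"
  assumes n2: "n \<ge> 2" and seed: "LP_seed n F" and cond: "condition_1_2 n F"
begin

abbreviation M where "M i \<equiv> lex_first n (F i)"
definition S where "S = (\<Union>j\<in>{2..n}. {lvar j, xprime n F j})"
definition B where "B = ralg (phi ` S)"
definition D where "D j m \<longleftrightarrow> XX (m - ee j) \<in> B"

lemma keys_F: "i \<in> {1..n} \<Longrightarrow> m \<in> Poly_Mapping.keys (F i) \<Longrightarrow> expo_ok n m \<and> (\<forall>k. 0 \<le> Poly_Mapping.lookup m k)"
proof -
  assume a: "i \<in> {1..n}" "m \<in> Poly_Mapping.keys (F i)"
  have "pirreducible n (F i)" using bspec[OF seed[unfolded LP_seed_def] a(1)] by (rule conjunct1)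
  then have "is_poly n (F i)" unfolding pirreducible_def polyring_def by simp
  then show ?thesis using a(2) unfolding is_poly_def by simp
qed

lemma condk: "k \<in> {1..n} \<Longrightarrow> hatF n F k = F k \<and>
     Poly_Mapping.lookup (F k) (lex_first n (F k)) = 1 \<and>
     (k < n \<longrightarrow> (\<forall>i \<in> {1..k}. Poly_Mapping.lookup (lex_first n (F k)) i = 0)) \<and>
     (k = n \<longrightarrow> lex_first n (F k) = 0) \<and>
     ((k \<noteq> 1 \<and> involves (F k) 1) \<longrightarrow>
        (\<forall>m \<in> Poly_Mapping.keys (F k - lex_first_mono n (F k)). Poly_Mapping.lookup m 1 \<ge> 1)) \<and>
     ((k \<notin> {1, 2} \<and> \<not> involves (F k) 1) \<longrightarrow>
        (\<forall>i \<in> {2..k-1}. Poly_Mapping.lookup (lex_first n (F i)) k \<ge> 1 \<longrightarrow>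
           (\<forall>m \<in> Poly_Mapping.keys (F k - lex_first_mono n (F k)). Poly_Mapping.lookup m i \<ge> 1)))"
  using cond unfolding condition_1_2_def by (rule bspec)

lemma M_key: "i \<in> {1..n} \<Longrightarrow> Poly_Mapping.lookup (F i) (M i) = 1"
  using condk by blast

lemma M_in: "i \<in> {1..n} \<Longrightarrow> M i \<in> Poly_Mapping.keys (F i)"
  using M_key by (simp add: in_keys_iff)

lemma M_nonneg: "i \<in> {1..n} \<Longrightarrow> 0 \<le> Poly_Mapping.lookup (M i) k"
  using keys_F[OF _ M_in] by blast

lemma M_supp: assumes "i \<in> {1..n}" "Poly_Mapping.lookup (M i) k \<noteq> 0" shows "k \<in> {i+1..n}"
proof -
  have "k \<in> {1..n}" using keys_F[OF assms(1) M_in[OF assms(1)]] assms(2) unfolding expo_ok_def by blast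
  moreover have "k > i"
  proof (cases "i < n")
    case True
    then have "\<forall>k\<in>{1..i}. Poly_Mapping.lookup (M i) k = 0" using condk[OF assms(1)] by blast
    then show ?thesis using \<open>k \<in> {1..n}\<close> assms(2) by (meson atLeastAtMost_iff not_less)
  next
    case False
    then have "i = n" using assms(1) by auto
    then have "M i = 0" using condk[OF assms(1)] by blast
    then show ?thesis using assms(2) by simp
  qed
  ultimately show ?thesis by auto
qed

lemma M_mon: "i \<in> {1..n} \<Longrightarrow> mon n (M i)"
  unfolding mon_def using M_nonneg M_supp by fastforce

lemma lfm: "i \<in> {1..n} \<Longrightarrow> lex_first_mono n (F i) = XX (M i)"
  by (simp add: lex_first_mono_def XX_def M_key)

lemma xprime_eq: "i \<in> {1..n} \<Longrightarrow> xprime n F i = F i * XX (- ee i)"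
  using condk unfolding xprime_def
  by (simp add: lvar_pow_XX ee_def single_uminus)

lemma cond_iii: "i \<in> {2..n} \<Longrightarrow> involves (F i) 1 \<Longrightarrow> m \<in> Poly_Mapping.keys (F i - XX (M i)) \<Longrightarrow> 1 \<le> Poly_Mapping.lookup m 1"
proof -
  assume a: "i \<in> {2..n}" "involves (F i) 1" "m \<in> Poly_Mapping.keys (F i - XX (M i))"
  have "i \<in> {1..n}" "i \<noteq> 1" using a(1) by auto
  then show ?thesis using condk[of i] a lfm[of i] by simp
qed

lemma cond_iv: "i \<in> {3..n} \<Longrightarrow> \<not> involves (F i) 1 \<Longrightarrow> i' \<in> {2..i-1} \<Longrightarrow> 1 \<le> Poly_Mapping.lookup (M i') i
   \<Longrightarrow> m \<in> Poly_Mapping.keys (F i - XX (M i)) \<Longrightarrow> 1 \<le> Poly_Mapping.lookup m i'"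
proof -
  assume a: "i \<in> {3..n}" "\<not> involves (F i) 1" "i' \<in> {2..i-1}" "1 \<le> Poly_Mapping.lookup (M i') i"
     "m \<in> Poly_Mapping.keys (F i - XX (M i))"
  have "i \<in> {1..n}" "i \<notin> {1,2}" using a(1) by auto
  then show ?thesis using condk[of i] a lfm[of i] by simp
qed

lemma keys_nz1: "\<not> involves p 1 \<Longrightarrow> m \<in> Poly_Mapping.keys p \<Longrightarrow> Poly_Mapping.lookup m 1 = 0"
  unfolding involves_def by blast

lemma lookup_ee1: "k \<noteq> 1 \<Longrightarrow> Poly_Mapping.lookup (ee k) 1 = 0"
  by (simp add: lookup_ee)

lemma phi_lvar: "k \<noteq> 1 \<Longrightarrow> phi (lvar k) = lvar k"
  by (auto simp: lvar_def phi_single ee_def[symmetric] lookup_ee)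

lemma lvar_B: "k \<in> {2..n} \<Longrightarrow> lvar k \<in> B"
proof -
  assume k: "k \<in> {2..n}"
  then have "lvar k \<in> S" unfolding S_def by blast
  then have "lvar k \<in> phi ` S" using phi_lvar[of k] k by (metis image_eqI not_one_le_zero one_add_one atLeastAtMost_iff add_le_same_cancel2)
  then show ?thesis unfolding B_def by (rule ralg.gen)
qed

lemma mon_B: "mon n m \<Longrightarrow> XX m \<in> B"
  unfolding B_def by (rule mon_XX) (use lvar_B B_def in auto)

lemma poly_B: "(\<And>m. m \<in> Poly_Mapping.keys p \<Longrightarrow> mon n m) \<Longrightarrow> p \<in> B"
  unfolding B_def by (rule poly_in_ralg) (use lvar_B B_def in auto)


lemma phi_xprime_notinv: assumes "i \<in> {2..n}" "\<not> involves (F i) 1"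
  shows "phi (xprime n F i) = xprime n F i"
proof (rule phi_id)
  fix m assume "m \<in> Poly_Mapping.keys (xprime n F i)"
  then obtain a b where "m = a + b" "a \<in> Poly_Mapping.keys (F i)" "b \<in> Poly_Mapping.keys (XX (- ee i) :: 'a lpoly)"
    using keys_mult xprime_eq[of i] assms(1) by fastforce
  then show "Poly_Mapping.lookup m 1 = 0"
    using keys_nz1[OF assms(2)] assms(1) by (auto simp: keys_XX lookup_add lookup_minus lookup_ee)
qed

lemma xprime_B: "i \<in> {2..n} \<Longrightarrow> \<not> involves (F i) 1 \<Longrightarrow> xprime n F i \<in> B"
proof -
  assume k: "i \<in> {2..n}" "\<not> involves (F i) 1"
  then have "xprime n F i \<in> S" unfolding S_def by blast
  then have "xprime n F i \<in> phi ` S" using phi_xprime_notinv[OF k] by (metis image_eqI)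
  then show ?thesis unfolding B_def by (rule ralg.gen)
qed

lemma Apos_F: "i \<in> {1..n} \<Longrightarrow> Apos (F i)"
  unfolding Apos_def using keys_F by blast

lemma Apos_XXee: "k \<noteq> 1 \<Longrightarrow> Apos (XX (- ee k))"
  unfolding Apos_def by (simp add: keys_XX lookup_ee)

lemma phi_xprime_inv: assumes "i \<in> {2..n}" "involves (F i) 1"
  shows "phi (xprime n F i) = XX (M i - ee i)"
proof -
  have i1: "i \<in> {1..n}" "i \<noteq> 1" using assms(1) by auto
  have "phi (F i) = phi (XX (M i)) + phi (F i - XX (M i))"
    by (simp flip: phi_add)
  also have "phi (F i - XX (M i)) = 0"
    by (rule phi_kill) (use cond_iii[OF assms] in force)
  also have "phi (XX (M i)) = XX (M i)"
  proof -
    have "Poly_Mapping.lookup (M i) 1 = 0"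
    proof (rule ccontr)
      assume "Poly_Mapping.lookup (M i) 1 \<noteq> 0"
      then have "1 \<in> {i+1..n}" by (rule M_supp[OF i1(1)])
      then show False using i1 by auto
    qed
    then show ?thesis by (simp add: XX_def phi_single)
  qed
  finally have pF: "phi (F i) = XX (M i)" by simp
  have pX: "phi (XX (- ee i)) = (XX (- ee i) :: 'a lpoly)"
    using i1 by (auto simp: XX_def phi_single lookup_ee)
  show ?thesis
    using i1 by (simp add: xprime_eq phi_mult Apos_F Apos_XXee pF pX XX_add[symmetric])
qed

lemma D_start: "i \<in> {2..n} \<Longrightarrow> involves (F i) 1 \<Longrightarrow> D i (M i)"
proof -
  assume k: "i \<in> {2..n}" "involves (F i) 1"
  then have "xprime n F i \<in> S" unfolding S_def by blast
  then have "XX (M i - ee i) \<in> phi ` S" using phi_xprime_inv[OF k] by (metis image_eqI)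
  then show ?thesis unfolding D_def B_def by (rule ralg.gen)
qed

lemma D_up: assumes "D j m" "mon n N" shows "D j (m + N)"
proof -
  have "XX (m + N - ee j) = (XX (m - ee j) * XX N :: 'a lpoly)"
    by (simp add: XX_add[symmetric] algebra_simps)
  then show ?thesis using assms unfolding D_def B_def by (simp add: mon_B[unfolded B_def] ralg.mult)
qed

lemma D_inv: assumes "XX (- ee i) \<in> B" "D j (R + ee i)" shows "D j R"
proof -
  have "XX (R - ee j) = (XX (R + ee i - ee j) * XX (- ee i) :: 'a lpoly)"
    by (simp add: XX_add[symmetric] algebra_simps)
  then show ?thesis using assms unfolding D_def B_def by (simp add: ralg.mult)
qed

end



context lpctx begin

lemma D_step:
  assumes i: "i \<in> {2..n}" and ni: "\<not> involves (F i) 1" and i': "i' \<in> {2..n}"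
    and dv: "\<And>m. m \<in> Poly_Mapping.keys (F i - XX (M i)) \<Longrightarrow> 1 \<le> Poly_Mapping.lookup m i'"
    and R: "mon n R" and d1: "D j (R + ee i)" and side: "i' = j \<or> D j (R + ee i')"
  shows "D j (R + M i)"
proof -
  have i1: "i \<in> {1..n}" "i \<noteq> 1" using i by auto
  define Q where "Q = F i - XX (M i)"
  define P where "P = (\<Sum>m\<in>Poly_Mapping.keys Q. Poly_Mapping.single (m - ee i') (Poly_Mapping.lookup Q m))"
  have "XX (ee i') * P = (\<Sum>m\<in>Poly_Mapping.keys Q. Poly_Mapping.single (ee i' + (m - ee i')) (Poly_Mapping.lookup Q m))"
    unfolding P_def by (simp add: sum_distrib_left XX_def mult_single)
  also have "\<dots> = Q" by (subst (2) pm_sum_singles) simp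
  finally have QP: "XX (ee i') * P = Q" .
  have monQ: "mon n (m - ee i')" if m: "m \<in> Poly_Mapping.keys Q" for m
  proof -
    have "m \<in> Poly_Mapping.keys (F i) \<union> Poly_Mapping.keys (XX (M i) :: 'a lpoly)"
      using subsetD[OF keys_diff m[unfolded Q_def]] .
    then have mk: "m \<in> Poly_Mapping.keys (F i) \<or> m = M i" by (auto simp: keys_XX)
    then have mF: "m \<in> Poly_Mapping.keys (F i)" using M_in[OF i1(1)] by auto
    have e: "expo_ok n m" "\<forall>k. 0 \<le> Poly_Mapping.lookup m k" using keys_F[OF i1(1) mF] by auto
    have z1: "Poly_Mapping.lookup m 1 = 0" using keys_nz1[OF ni mF] .
    have ge: "1 \<le> Poly_Mapping.lookup m i'" using dv m unfolding Q_def by blast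
    show ?thesis unfolding mon_def
    proof (intro conjI allI impI)
      fix k show "0 \<le> Poly_Mapping.lookup (m - ee i') k"
      proof (cases "k = i'")
        case True then show ?thesis using ge by (simp add: lookup_minus lookup_ee)
      next
        case False then show ?thesis using e(2) by (simp add: lookup_minus lookup_ee)
      qed
    next
      fix k assume "Poly_Mapping.lookup (m - ee i') k \<noteq> 0"
      then show "k \<in> {2..n}"
      proof (cases "k = i'")
        case False
        then have "Poly_Mapping.lookup m k \<noteq> 0" using \<open>Poly_Mapping.lookup (m - ee i') k \<noteq> 0\<close>
          by (simp add: lookup_minus lookup_ee)
        then have "k \<in> {1..n}" using e(1) unfolding expo_ok_def by blast
        moreover have "k \<noteq> 1" using z1 \<open>Poly_Mapping.lookup m k \<noteq> 0\<close> by auto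
        ultimately show ?thesis by auto
      qed (use i' in auto)
    qed
  qed
  have PB: "P \<in> B"
  proof (rule poly_B)
    fix m assume "m \<in> Poly_Mapping.keys P"
    then have "m \<in> (\<Union>m'\<in>Poly_Mapping.keys Q. Poly_Mapping.keys (Poly_Mapping.single (m' - ee i') (Poly_Mapping.lookup Q m')))"
      unfolding P_def by (rule subsetD[OF keys_sum])
    then obtain m' where m': "m' \<in> Poly_Mapping.keys Q" "m \<in> Poly_Mapping.keys (Poly_Mapping.single (m' - ee i') (Poly_Mapping.lookup Q m'))"
      by (rule UN_E)
    have "m = m' - ee i'" using m'(2) by (metis empty_iff keys_single singletonD)
    then show "mon n m" using monQ m'(1) by simp
  qed
  have FQ: "F i = XX (M i) + XX (ee i') * P" unfolding QP Q_def by simp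
  have xB: "xprime n F i \<in> B" using xprime_B[OF i ni] .
  have e1: "XX (R + ee i - ee j) * XX (- ee i) = (XX (R - ee j) :: 'a lpoly)"
    by (simp only: XX_add[symmetric]) (rule arg_cong[where f=XX], simp add: algebra_simps)
  have e2: "XX (R - ee j) * XX (M i) = (XX (R + M i - ee j) :: 'a lpoly)"
    by (simp only: XX_add[symmetric]) (rule arg_cong[where f=XX], simp add: algebra_simps)
  have e3: "XX (R - ee j) * XX (ee i') = (XX (R + ee i' - ee j) :: 'a lpoly)"
    by (simp only: XX_add[symmetric]) (rule arg_cong[where f=XX], simp add: algebra_simps)
  have prod: "XX (R + ee i - ee j) * xprime n F i = XX (R + M i - ee j) + XX (R + ee i' - ee j) * P"
  proof -
    have "XX (R + ee i - ee j) * xprime n F i = XX (R + ee i - ee j) * (F i * XX (- ee i))"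
      by (simp only: xprime_eq[OF i1(1)])
    also have "\<dots> = (XX (R + ee i - ee j) * XX (- ee i)) * F i"
      by (simp only: mult.assoc mult.commute)
    also have "\<dots> = XX (R - ee j) * (XX (M i) + XX (ee i') * P)"
      by (simp only: e1 FQ[symmetric])
    also have "\<dots> = XX (R - ee j) * XX (M i) + (XX (R - ee j) * XX (ee i')) * P"
      by (simp only: distrib_left mult.assoc)
    finally show ?thesis by (simp only: e2 e3)
  qed
  have sB: "XX (R + ee i' - ee j) * P \<in> B"
  proof (cases "i' = j")
    case True
    then have "XX (R + ee i' - ee j) = (XX R :: 'a lpoly)" by simp
    then show ?thesis using mon_B[OF R] PB unfolding B_def by (simp add: ralg.mult)
  next
    case False
    then show ?thesis using side PB unfolding D_def B_def by (simp add: ralg.mult)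
  qed
  have "XX (R + ee i - ee j) * xprime n F i \<in> B"
    using d1 xB unfolding D_def B_def by (simp add: ralg.mult)
  then have "XX (R + M i - ee j) \<in> B"
  proof -
    have "XX (R + M i - ee j) = XX (R + ee i - ee j) * xprime n F i - XX (R + ee i' - ee j) * P"
      by (simp only: prod add_diff_cancel_right')
    then show ?thesis using ralg_diff[OF \<open>XX (R + ee i - ee j) * xprime n F i \<in> B\<close>[unfolded B_def] sB[unfolded B_def]]
      unfolding B_def by simp
  qed
  then show ?thesis unfolding D_def .
qed

definition Lprop where
  "Lprop j i \<longleftrightarrow> (\<forall>R i'. mon n R \<longrightarrow> i' \<in> {j..i-1} \<longrightarrow> 1 \<le> Poly_Mapping.lookup (M i') i \<longrightarrow>
      D j (R + ee i) \<longrightarrow> (i' = j \<or> D j (R + ee i')) \<longrightarrow> D j R)"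

end



context lpctx begin

lemma SM:
  assumes j: "j \<in> {2..n}" and i0: "i0 \<in> {j..n}" and R: "mon n R" and d0: "D j (R + M i0)"
    and side: "i0 = j \<or> D j (R + ee i0)" and IH: "\<And>l. Poly_Mapping.lookup (M i0) l \<noteq> 0 \<Longrightarrow> Lprop j l"
  shows "D j R"
proof -
  have i01: "i0 \<in> {1..n}" using i0 j by auto
  define g where "g N = (\<Sum>k\<in>{1..n}. nat (Poly_Mapping.lookup (M i0) k - Poly_Mapping.lookup N k))" for N
  have key: "\<forall>N. (\<forall>k. 0 \<le> Poly_Mapping.lookup N k \<and> Poly_Mapping.lookup N k \<le> Poly_Mapping.lookup (M i0) k) \<longrightarrow> g N = d \<longrightarrow> D j (R + N)" for d
  proof (induction d rule: less_induct)
    case (less d)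
    show ?case
    proof (intro allI impI)
      fix N assume N: "\<forall>k. 0 \<le> Poly_Mapping.lookup N k \<and> Poly_Mapping.lookup N k \<le> Poly_Mapping.lookup (M i0) k"
        and gN: "g N = d"
      have monN: "mon n N" unfolding mon_def
      proof (intro conjI allI impI)
        fix k show "0 \<le> Poly_Mapping.lookup N k" using N by blast
      next
        fix k assume "Poly_Mapping.lookup N k \<noteq> 0"
        then have "Poly_Mapping.lookup (M i0) k \<noteq> 0" using N by (metis order_antisym)
        then have "k \<in> {i0+1..n}" by (rule M_supp[OF i01])
        then show "k \<in> {2..n}" using i0 j by auto
      qed
      show "D j (R + N)"
      proof (cases "\<exists>k\<in>{1..n}. Poly_Mapping.lookup N k < Poly_Mapping.lookup (M i0) k")
        case False
        have "N = M i0"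
        proof (rule poly_mapping_eqI)
          fix k show "Poly_Mapping.lookup N k = Poly_Mapping.lookup (M i0) k"
          proof (cases "k \<in> {1..n}")
            case True then show ?thesis using False N by (meson order_antisym not_less)
          next
            case False
            have "Poly_Mapping.lookup (M i0) k = 0"
            proof (rule ccontr)
              assume "Poly_Mapping.lookup (M i0) k \<noteq> 0"
              then have "k \<in> {i0+1..n}" by (rule M_supp[OF i01])
              then show False using False i01 by auto
            qed
            then show ?thesis using N by (metis order_antisym)
          qed
        qed
        then show ?thesis using d0 by simp
      next
        case True
        then obtain k where k: "k \<in> {1..n}" "Poly_Mapping.lookup N k < Poly_Mapping.lookup (M i0) k" by blast
        define N' where "N' = N + ee k"
        have N': "\<forall>k'. 0 \<le> Poly_Mapping.lookup N' k' \<and> Poly_Mapping.lookup N' k' \<le> Poly_Mapping.lookup (M i0) k'"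
        proof
          fix k' show "0 \<le> Poly_Mapping.lookup N' k' \<and> Poly_Mapping.lookup N' k' \<le> Poly_Mapping.lookup (M i0) k'"
            using N k(2) by (cases "k' = k") (auto simp: N'_def lookup_add lookup_ee)
        qed
        have "g N' < g N" unfolding g_def
        proof (rule sum_strict_mono_ex1)
          show "\<forall>x\<in>{1..n}. nat (Poly_Mapping.lookup (M i0) x - Poly_Mapping.lookup N' x)
                 \<le> nat (Poly_Mapping.lookup (M i0) x - Poly_Mapping.lookup N x)"
            by (auto simp: N'_def lookup_add lookup_ee)
          show "\<exists>a\<in>{1..n}. nat (Poly_Mapping.lookup (M i0) a - Poly_Mapping.lookup N' a)
                 < nat (Poly_Mapping.lookup (M i0) a - Poly_Mapping.lookup N a)"
            using k by (intro bexI[of _ k]) (auto simp: N'_def lookup_add lookup_ee)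
        qed simp
        then have "D j (R + N')" using less.IH gN N' by blast
        then have dk: "D j ((R + N) + ee k)" by (simp add: N'_def add.assoc)
        have Mk: "Poly_Mapping.lookup (M i0) k \<noteq> 0" using k(2) N by (metis not_less order_antisym)
        have kr: "k \<in> {i0+1..n}" by (rule M_supp[OF i01 Mk])
        have L: "Lprop j k" by (rule IH[OF Mk])
        have side': "i0 = j \<or> D j (R + N + ee i0)"
        proof (cases "i0 = j")
          case False
          then have "D j (R + ee i0 + N)" using side D_up monN by blast
          then show ?thesis by (simp add: ac_simps)
        qed simp
        have i0k: "i0 \<in> {j..k-1}" using i0 kr by auto
        have Mk1: "1 \<le> Poly_Mapping.lookup (M i0) k" using k(2) N by (metis add_0 int_one_le_iff_zero_less order_le_less_trans)
        show ?thesis using L[unfolded Lprop_def] mon_add[OF R monN] i0k Mk1 dk side' by blast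
      qed
    qed
  qed
  have "D j (R + 0)" by (rule key[of "g 0", rule_format]) (use M_nonneg[OF i01] in auto)
  then show ?thesis by simp
qed

lemma Lall:
  assumes j: "j \<in> {2..n}" and H: "\<And>i. i \<in> {j+1..n} \<Longrightarrow> involves (F i) 1 \<Longrightarrow> XX (- ee i) \<in> B"
  shows "i \<in> {j+1..n} \<Longrightarrow> Lprop j i"
proof -
  have step: "i \<in> {j+1..n} \<longrightarrow> Lprop j i"
    if "i \<le> n" and IHl: "\<And>l. i < l \<Longrightarrow> l \<le> n \<Longrightarrow> (l \<in> {j+1..n} \<longrightarrow> Lprop j l)" for i
  proof
    assume i: "i \<in> {j+1..n}"
    show "Lprop j i" unfolding Lprop_def
    proof (intro allI impI)
      fix R i' assume R: "mon n R" and i': "i' \<in> {j..i-1}" and Mi': "1 \<le> Poly_Mapping.lookup (M i') i"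
        and d1: "D j (R + ee i)" and side: "i' = j \<or> D j (R + ee i')"
      show "D j R"
      proof (cases "involves (F i) 1")
        case True
        have "XX (- ee i) \<in> B" by (rule H[OF i True])
        from D_inv[OF this d1] show ?thesis .
      next
        case False
        have i2: "i \<in> {2..n}" "i \<in> {3..n}" using i j by auto
        have i'2: "i' \<in> {2..i-1}" "i' \<in> {2..n}" using i' j i by auto
        have dv: "\<And>m. m \<in> Poly_Mapping.keys (F i - XX (M i)) \<Longrightarrow> 1 \<le> Poly_Mapping.lookup m i'"
          by (rule cond_iv[OF i2(2) False i'2(1) Mi'])
        have dM: "D j (R + M i)" by (rule D_step[OF i2(1) False i'2(2) dv R d1 side])
        show ?thesis
        proof (rule SM[OF j _ R dM])
          show "i \<in> {j..n}" using i by auto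
          show "i = j \<or> D j (R + ee i)" using d1 by blast
          fix l assume "Poly_Mapping.lookup (M i) l \<noteq> 0"
          then have "l \<in> {i+1..n}" using M_supp[of i l] i2 by auto
          then show "Lprop j l" using IHl[of l] i by auto
        qed
      qed
    qed
  qed
  assume iin: "i \<in> {j+1..n}"
  then have "i \<le> n" by simp
  then have "i \<in> {j+1..n} \<longrightarrow> Lprop j i"
    by (rule desc_induct[where P="\<lambda>i. i \<in> {j+1..n} \<longrightarrow> Lprop j i", OF _ step])
  then show "Lprop j i" using iin by blast
qed

lemma Main: "j \<in> {2..n} \<Longrightarrow> involves (F j) 1 \<Longrightarrow> XX (- ee j) \<in> B"
proof -
  have step: "j \<in> {2..n} \<longrightarrow> involves (F j) 1 \<longrightarrow> XX (- ee j) \<in> B"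
    if "j \<le> n" and IHl: "\<And>l. j < l \<Longrightarrow> l \<le> n \<Longrightarrow> (l \<in> {2..n} \<longrightarrow> involves (F l) 1 \<longrightarrow> XX (- ee l) \<in> B)" for j
  proof (intro impI)
    assume j: "j \<in> {2..n}" and inv: "involves (F j) 1"
    have H: "\<And>i. i \<in> {j+1..n} \<Longrightarrow> involves (F i) 1 \<Longrightarrow> XX (- ee i) \<in> B"
      using IHl j by auto
    have m0: "mon n 0" by (simp add: mon_def)
    have "D j 0"
    proof (rule SM[OF j _ m0])
      show "j \<in> {j..n}" using j by auto
      show "D j (0 + M j)" using D_start[OF j inv] by simp
      show "j = j \<or> D j (0 + ee j)" by simp
      fix l assume "Poly_Mapping.lookup (M j) l \<noteq> 0"
      then have "l \<in> {j+1..n}" using M_supp[of j l] j by auto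
      then show "Lprop j l" using Lall[OF j H] by blast
    qed
    then show "XX (- ee j) \<in> B" unfolding D_def by simp
  qed
  assume jin: "j \<in> {2..n}" "involves (F j) 1"
  then have "j \<le> n" by simp
  then have "j \<in> {2..n} \<longrightarrow> involves (F j) 1 \<longrightarrow> XX (- ee j) \<in> B"
    by (rule desc_induct[where P="\<lambda>j. j \<in> {2..n} \<longrightarrow> involves (F j) 1 \<longrightarrow> XX (- ee j) \<in> B", OF _ step])
  then show ?thesis using jin by blast
qed

lemma xminus_inv: "involves (F j) 1 \<Longrightarrow> xminus n F j = XX (- ee j)"
  by (simp add: xminus_def lvar_pow_XX ee_def single_uminus)

lemma final: "phi ` ralg S = ralg (\<Union>j\<in>{2..n}. {lvar j, xminus n F j})" (is "_ = ralg ?T")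
proof -
  have A: "Apos s" if sS: "s \<in> S" for s
  proof -
    obtain j where j: "j \<in> {2..n}" "s = lvar j \<or> s = xprime n F j" using sS unfolding S_def by blast
    then have j1: "j \<in> {1..n}" "j \<noteq> 1" by auto
    show ?thesis
    proof (cases "s = lvar j")
      case True then show ?thesis using j1 by (simp add: Apos_def lvar_XX keys_XX lookup_ee)
    next
      case False
      then have "s = F j * XX (- ee j)" using j xprime_eq[OF j1(1)] by simp
      then show ?thesis using Apos_mult Apos_F[OF j1(1)] Apos_XXee[OF j1(2)] by simp
    qed
  qed
  have eq: "phi ` ralg S = B" unfolding B_def by (rule phi_ralg[OF A])
  have lT: "lvar k \<in> ralg ?T" if "k \<in> {2..n}" for k using that by (intro ralg.gen) blast
  have "B \<subseteq> ralg ?T" unfolding B_def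
  proof (rule ralg_mono, rule subsetI)
    fix y assume "y \<in> phi ` S"
    then obtain s j where s: "y = phi s" "j \<in> {2..n}" "s = lvar j \<or> s = xprime n F j" unfolding S_def by blast
    then have j1: "j \<noteq> 1" by auto
    show "y \<in> ralg ?T"
    proof (cases "s = lvar j")
      case True
      then have "y = lvar j" using s phi_lvar[OF j1] by simp
      then show ?thesis using lT s(2) by simp
    next
      case False
      then have sx: "s = xprime n F j" using s by blast
      show ?thesis
      proof (cases "involves (F j) 1")
        case True
        have "y = XX (M j) * XX (- ee j)" using s sx phi_xprime_inv[OF s(2) True] by (simp add: XX_add[symmetric])
        moreover have "XX (M j) \<in> ralg ?T" by (rule mon_XX[OF lT M_mon]) (use s in auto)
        moreover have "XX (- ee j) \<in> ralg ?T" using xminus_inv[OF True] s(2) by (intro ralg.gen) (auto intro: sym)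
        ultimately show ?thesis by (simp add: ralg.mult)
      next
        case False
        have "y = xminus n F j" using s sx phi_xprime_notinv[OF s(2) False] False by (simp add: xminus_def)
        then show ?thesis using s(2) by (intro ralg.gen) blast
      qed
    qed
  qed
  moreover have "ralg ?T \<subseteq> B" unfolding B_def
  proof (rule ralg_mono, rule subsetI)
    fix y assume "y \<in> ?T"
    then obtain j where j: "j \<in> {2..n}" "y = lvar j \<or> y = xminus n F j" by blast
    then show "y \<in> ralg (phi ` S)"
      using lvar_B[OF j(1)] xprime_B[OF j(1)] Main[OF j(1)] xminus_inv[of j]
      unfolding B_def by (cases "involves (F j) 1") (auto simp: xminus_def)
  qed
  ultimately show ?thesis using eq by blast
qed

end

theorem lemma4p21:
  fixes n :: nat and F :: "nat \<Rightarrow> 'a::{factorial_semiring, comm_ring_1, ring_char_0} lpoly"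
  assumes "n \<ge> 2"
    and "LP_seed n F"
    and "condition_1_2 n F"
  shows "phi ` ralg (\<Union>j \<in> {2..n}. {lvar j, xprime n F j})
       = ralg (\<Union>j \<in> {2..n}. {lvar j, xminus n F j})"
proof -
  interpret lpctx n F by unfold_locales (use assms in auto)
  show ?thesis using final unfolding S_def .
qed



end
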